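(* Let $m\leqslant n$ be natural numbers. For $k\in\{1,\dots,2^m-1\}$ let $Q^k(n)=|\{s\in\{0,\dots,n-1\}: k_s=0\text{ and }b^k_{s+1}\neq 0\}|$. Then $$Q(m,n):=\sum_{k=1}^{2^m-1}Q^k(n)=2^m\left(n-\frac m2-1\right)-n+m+1.$$
   Context: For an integer $k\geqslant 0$, $k_i$ are its binary digits ($k=\sum_ik_i2^i$) and $b^k_{s}=k\bmod 2^s$ for $s\geqslant 0$. ($Q(m,n)$ is the number of multi-controlled gates used in the paper's column-by-column decomposition of an $m$ to $n$ isometry.) *)

theory Defs
  imports Complex_Main
begin

text \<open>Binary digit k_s of k and the residue b^k_s = k mod 2^s.\<close>
definition bdigit :: "nat \<Rightarrow> nat \<Rightarrow> nat" where
  "bdigit k s = (k div 2 ^ s) mod 2"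

definition bres :: "nat \<Rightarrow> nat \<Rightarrow> nat" where
  "bres k s = k mod 2 ^ s"

definition Qk :: "nat \<Rightarrow> nat \<Rightarrow> nat" where
  "Qk k n = card {s \<in> {0..<n}. bdigit k s = 0 \<and> bres k (s + 1) \<noteq> 0}"

definition Q :: "nat \<Rightarrow> nat \<Rightarrow> nat" where
  "Q m n = (\<Sum>k = 1..2 ^ m - 1. Qk k n)"

end

theory Submission
  imports Defs
begin

definition f :: "nat \<Rightarrow> nat \<Rightarrow> nat" where
  "f k s = (if bdigit k s = 0 \<and> bres k (s + 1) \<noteq> 0 then 1 else 0)"

lemma Qk_sum: "Qk k n = (\<Sum>s<n. f k s)"
proof -
  have "Qk k n = card {s \<in> {..<n}. bdigit k s = 0 \<and> bres k (s + 1) \<noteq> 0}"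
    unfolding Qk_def by (simp add: lessThan_atLeast0)
  also have "\<dots> = (\<Sum>s<n. f k s)"
    unfolding f_def by (simp add: sum.If_cases Int_def)
  finally show ?thesis .
qed

lemma split_sum: fixes N :: nat shows "(\<Sum>k<N+N. g k) = (\<Sum>k<N. g k) + (\<Sum>k<N. g (k + N) :: nat)"
proof -
  have "(\<Sum>k<N+N. g k) = (\<Sum>k<N. g k) + (\<Sum>k=N..<N+N. g k)"
    by (simp add: sum.atLeastLessThan_concat[symmetric, of 0 N "N+N"] lessThan_atLeast0)
  also have "(\<Sum>k=N..<N+N. g k) = (\<Sum>k<N. g (k + N))"
    using sum.shift_bounds_nat_ivl[of g 0 N N] by (simp add: lessThan_atLeast0)
  finally show ?thesis .
qed

lemma f_mod: "f k s = f (k mod 2^(s+1)) s"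
proof -
  have e: "k mod (2^s * 2) = 2^s * (k div 2^s mod 2) + k mod 2^s"
    by (rule mod_mult2_eq)
  have "(k mod 2^(s+1)) div 2^s = k div 2^s mod 2"
    by (simp only: power_Suc2 Suc_eq_plus1[symmetric] e) simp
  then have "bdigit k s = bdigit (k mod 2^(s+1)) s"
    unfolding bdigit_def by simp
  moreover have "bres k (s+1) = bres (k mod 2^(s+1)) (s+1)"
    unfolding bres_def by simp
  ultimately show ?thesis unfolding f_def by simp
qed

lemma f_shift:
  assumes "s < m" shows "f (j + 2^m) s = f j s"
proof -
  have "(2::nat)^(s+1) dvd 2^m" by (rule le_imp_power_dvd) (use assms in simp)
  then obtain r where r: "(2::nat)^m = 2^(s+1) * r" by (auto elim: dvdE)
  have "(j + 2^m) mod 2^(s+1) = j mod 2^(s+1)" unfolding r by simp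
  then show ?thesis by (metis f_mod)
qed

lemma f_big:
  assumes "m \<le> s" "k < 2^m" shows "f k s = (if k = 0 then 0 else 1)"
proof -
  have "k < 2^s" using assms by (meson less_le_trans one_le_numeral power_increasing)
  then have "bdigit k s = 0" unfolding bdigit_def by simp
  moreover have "bres k (s+1) = k" unfolding bres_def
    using \<open>k < 2^s\<close> by (simp add: less_le_trans)
  ultimately show ?thesis unfolding f_def by simp
qed

lemma count_base: "(\<Sum>k<2^(s+1). f k s) = 2^s - 1"
proof -
  have "(\<Sum>k<2^(s+1). f k s) = (\<Sum>k<2^s. f k s) + (\<Sum>k<2^s. f (k + 2^s) s)"
    using split_sum[of "\<lambda>k. f k s" "2^s"] by (simp add: mult_2)
  moreover have "\<And>k. k < 2^s \<Longrightarrow> f (k + 2^s) s = 0"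
  proof -
    fix k :: nat assume "k < 2^s"
    then have "(k + 2^s) div 2^s = 1" by simp
    then show "f (k + 2^s) s = 0" unfolding f_def bdigit_def by simp
  qed
  moreover have "\<And>k. k < 2^s \<Longrightarrow> f k s = (if k = 0 then 0 else 1)"
    by (rule f_big) auto
  ultimately have "(\<Sum>k<2^(s+1). f k s) = (\<Sum>k<2^s. if (k::nat) = 0 then 0 else 1::nat)"
    by simp
  also have "\<dots> = card ({..<2^s} - {0::nat})"
    by (simp add: sum.If_cases Int_def Diff_eq Compl_eq)
  also have "\<dots> = 2^s - 1" by simp
  finally show ?thesis .
qed

lemma count_small: "(\<Sum>k<2^(s+1+d). f k s) = 2^d * (2^s - 1)"
proof (induction d)
  case 0 then show ?case using count_base by simp
next
  case (Suc d)
  have "(\<Sum>k<2^(s+1+Suc d). f k s) = (\<Sum>k<2^(s+1+d). f k s) + (\<Sum>k<2^(s+1+d). f (k + 2^(s+1+d)) s)"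
    using split_sum[of "\<lambda>k. f k s" "2^(s+1+d)"] by (simp add: mult_2)
  also have "(\<Sum>k<2^(s+1+d). f (k + 2^(s+1+d)) s) = (\<Sum>k<2^(s+1+d). f k s)"
    by (rule sum.cong[OF refl], rule f_shift) simp
  finally show ?case using Suc by simp
qed

definition c :: "nat \<Rightarrow> nat \<Rightarrow> nat" where
  "c m s = (if s < m then 2^(m-s-1) * (2^s - 1) else 2^m - 1)"

lemma count: "(\<Sum>k<2^m. f k s) = c m s"
proof (cases "s < m")
  case True
  then obtain d where "m = s + 1 + d" by (metis Suc_eq_plus1 less_imp_Suc_add add_Suc)
  then show ?thesis using count_small[of s d] True unfolding c_def by simp
next
  case False
  then have "(\<Sum>k<2^m. f k s) = (\<Sum>k<2^m. if (k::nat) = 0 then 0 else 1::nat)"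
    by (intro sum.cong refl, subst f_big[of m s]) (use False in auto)
  also have "\<dots> = card ({..<2^m} - {0::nat})"
    by (simp add: sum.If_cases Int_def Diff_eq Compl_eq)
  also have "\<dots> = 2^m - 1" by simp
  finally show ?thesis using False unfolding c_def by simp
qed

lemma S_rec: "real (\<Sum>s<m. c m s) = real m * 2^m / 2 - 2^m + 1"
proof (induction m)
  case 0 then show ?case by simp
next
  case (Suc m)
  have "(\<Sum>s<Suc m. c (Suc m) s) = (\<Sum>s<m. c (Suc m) s) + c (Suc m) m" by simp
  also have "(\<Sum>s<m. c (Suc m) s) = (\<Sum>s<m. 2 * c m s)"
  proof (rule sum.cong[OF refl])
    fix s assume "s \<in> {..<m}"
    then have "Suc m - s - 1 = Suc (m - s - 1)" by auto
    then show "c (Suc m) s = 2 * c m s" using \<open>s \<in> {..<m}\<close> by (simp add: c_def)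
  qed
  also have "c (Suc m) m = 2^m - 1" by (simp add: c_def)
  finally have N: "(\<Sum>s<Suc m. c (Suc m) s) + 1 = 2 * (\<Sum>s<m. c m s) + 2^m"
    by (simp add: sum_distrib_left[symmetric])
  have "real (\<Sum>s<Suc m. c (Suc m) s) + 1 = 2 * real (\<Sum>s<m. c m s) + 2^m"
    using arg_cong[OF N, of real] by simp
  with Suc show ?case by (simp add: field_simps)
qed

theorem corollary1:
  fixes m n :: nat
  assumes "m \<le> n"
  shows "real (Q m n) = 2 ^ m * (real n - real m / 2 - 1) - real n + real m + 1"
proof -
  have Q0: "Qk 0 n = 0" by (simp add: Qk_sum f_def bres_def)
  have "{..<(2::nat)^m} = insert 0 {1..2^m-1}" by auto
  then have "(\<Sum>k<2^m. Qk k n) = Q m n" unfolding Q_def using Q0 by simp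
  then have "Q m n = (\<Sum>k<2^m. \<Sum>s<n. f k s)" by (simp add: Qk_sum)
  also have "\<dots> = (\<Sum>s<n. \<Sum>k<2^m. f k s)" by (rule sum.swap)
  also have "\<dots> = (\<Sum>s<n. c m s)" by (simp add: count)
  also have "\<dots> = (\<Sum>s<m. c m s) + (\<Sum>s=m..<n. c m s)"
    using assms by (metis lessThan_atLeast0 sum.atLeastLessThan_concat zero_le)
  also have "(\<Sum>s=m..<n. c m s) = (n - m) * (2^m - 1)"
    by (simp add: c_def)
  finally have "real (Q m n) = real (\<Sum>s<m. c m s) + real (n - m) * (2^m - 1)"
    by (simp add: of_nat_diff)
  then show ?thesis using assms S_rec[of m] by (simp add: of_nat_diff field_simps)
qed

end
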